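(* Let $m,n\ge 2$, $\lambda>0$, $C\in\mathbb{R}^{m\times n}$, and let $a\in\Delta_m$, $b\in\Delta_n$ have strictly positive entries. Let $P^*=S_\lambda(C,a,b)$, $p^*=\mathrm{vec}(P^* )$, and let $(\alpha^*,\beta^* )$ be dual variables with $\mathcal{K}(c,a,b,p^*,\alpha^*,\beta^* )=0$ normalized so that $\beta^*_n=0$. Define the reduced map $\tilde{\mathcal{K}}(c,a,\tilde b,p,\alpha,\tilde\beta)\in\mathbb{R}^{l-1}$ as the first $l-1$ components of $\mathcal{K}(c,a,b,p,\alpha,\beta)$ evaluated with $\beta=[\tilde\beta;0]$ (these components do not depend on $b_n$). Then the matrix $$K:=\begin{bmatrix}\lambda\,\mathrm{diag}(p^* )^{-1} & \tilde E\\ \tilde E^\top & \mathbf{0}\end{bmatrix}\in\mathbb{R}^{(l-1)\times(l-1)}$$ is invertible, and $\tilde{\mathcal{K}}=0$ implicitly defines, in a neighborhood of $(c,a,\tilde b)$, a continuously differentiable map $(c,a,\tilde b)\mapsto(p,\alpha,\tilde\beta)$ taking the value $(p^*,\alpha^*,\tilde\beta^* )$ at $(c,a,\tilde b)$, whose Jacobian at that point is $$J=\frac{\partial[p;\alpha;\tilde\beta]}{\partial[c;-a;-\tilde b]}=-K^{-1}.$$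
   Context: $\Delta_m=\{a\in\mathbb{R}^m: a_i\ge 0,\ \sum_i a_i=1\}$; $\Pi(a,b)=\{P\in\mathbb{R}^{m\times n}_{\ge0}: P\mathbb{1}_n=a,\ P^\top\mathbb{1}_m=b\}$; $h(P)=-\sum_{i,j}P_{i,j}(\log P_{i,j}-1)$; $S_\lambda(C,a,b)=\arg\min_{P\in\Pi(a,b)}\langle P,C\rangle_F-\lambda h(P)$. Column-major vectorization: $\mathrm{vec}(X)_{(j-1)m+i}=X_{i,j}$; $c=\mathrm{vec}(C)$. $l=mn+m+n$. $\mathcal{K}(c,a,b,p,\alpha,\beta)=[\,c+\lambda\log(p)+\mathbb{1}_n\otimes\alpha+\beta\otimes\mathbb{1}_m;\ (\mathbb{1}_n^\top\otimes I_m)p-a;\ (I_n\otimes\mathbb{1}_m^\top)p-b\,]$. $E=[\mathbb{1}_n\otimes I_m,\ I_n\otimes\mathbb{1}_m]\in\mathbb{R}^{mn\times(m+n)}$ and $\tilde E$ is $E$ with its last column deleted. For $v\in\mathbb{R}^n$, $\tilde v=(v_1,\dots,v_{n-1})$. $[u;v]$ denotes vertical stacking. *)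

theory Defs
  imports "HOL-Analysis.Analysis"
begin

definition prob_simplex :: "real^'m \<Rightarrow> bool" where
  "prob_simplex a \<longleftrightarrow> (\<forall>i. a $ i \<ge> 0) \<and> (\<Sum>i\<in>UNIV. a $ i) = 1"

definition transport_polytope :: "real^'m \<Rightarrow> real^'n \<Rightarrow> (real^'n^'m) set" where
  "transport_polytope a b = {P. (\<forall>i j. P $ i $ j \<ge> 0)
      \<and> (\<forall>i. (\<Sum>j\<in>UNIV. P $ i $ j) = a $ i)
      \<and> (\<forall>j. (\<Sum>i\<in>UNIV. P $ i $ j) = b $ j)}"

text \<open>Frobenius inner product and entropy h(P) = - sum P_ij (log P_ij - 1) (with 0 log 0 = 0).\<close>
definition frob :: "real^'n^'m \<Rightarrow> real^'n^'m \<Rightarrow> real" where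
  "frob P C = (\<Sum>i\<in>UNIV. \<Sum>j\<in>UNIV. P $ i $ j * C $ i $ j)"

definition entropy :: "real^'n^'m \<Rightarrow> real" where
  "entropy P = - (\<Sum>i\<in>UNIV. \<Sum>j\<in>UNIV. P $ i $ j * (ln (P $ i $ j) - 1))"

definition ot_objective :: "real \<Rightarrow> real^'n^'m \<Rightarrow> real^'n^'m \<Rightarrow> real" where
  "ot_objective lam C P = frob P C - lam * entropy P"

definition is_sinkhorn :: "real \<Rightarrow> real^'n^'m \<Rightarrow> real^'m \<Rightarrow> real^'n \<Rightarrow> real^'n^'m \<Rightarrow> bool" where
  "is_sinkhorn lam C a b P \<longleftrightarrow> P \<in> transport_polytope a b \<and>
      (\<forall>Q\<in>transport_polytope a b. ot_objective lam C P \<le> ot_objective lam C Q)"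

text \<open>The KKT map K(c,a,b,p,alpha,beta) in R^l, l = mn+m+n.  The vectorised index
  (j-1)m+i of vec(.) is represented by the pair (i,j); the three blocks by the sum type.\<close>
definition KKT :: "real \<Rightarrow> real^'n^'m \<Rightarrow> real^'m \<Rightarrow> real^'n \<Rightarrow> real^('m \<times> 'n)
                   \<Rightarrow> real^'m \<Rightarrow> real^'n \<Rightarrow> real^(('m \<times> 'n) + ('m + 'n))" where
  "KKT lam C a b p \<alpha> \<beta> = (\<chi> r. case r of
      Inl (i, j) \<Rightarrow> C $ i $ j + lam * ln (p $ (i, j)) + \<alpha> $ i + \<beta> $ j
    | Inr (Inl i) \<Rightarrow> (\<Sum>j\<in>UNIV. p $ (i, j)) - a $ i
    | Inr (Inr j) \<Rightarrow> (\<Sum>i\<in>UNIV. p $ (i, j)) - b $ j)"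

text \<open>Reduced index set of size l-1: columns are indexed by the option type over 'k,
  the last column n being None; the first n-1 columns are Some k.\<close>
type_synonym ('m, 'k) ridx = "('m \<times> 'k option) + ('m + 'k)"

definition red_emb :: "('m, 'k) ridx \<Rightarrow> ('m \<times> 'k option) + ('m + 'k option)" where
  "red_emb r = (case r of Inl ij \<Rightarrow> Inl ij | Inr (Inl i) \<Rightarrow> Inr (Inl i)
                | Inr (Inr k) \<Rightarrow> Inr (Inr (Some k)))"

definition ext0 :: "real^'k \<Rightarrow> real^('k option)" where
  "ext0 v = (\<chi> j. case j of None \<Rightarrow> 0 | Some k \<Rightarrow> v $ k)"

definition ext_with :: "real \<Rightarrow> real^'k \<Rightarrow> real^('k option)" where
  "ext_with bn v = (\<chi> j. case j of None \<Rightarrow> bn | Some k \<Rightarrow> v $ k)"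

definition pack :: "real^('m \<times> 'k option) \<Rightarrow> real^'m \<Rightarrow> real^'k \<Rightarrow> real^('m::finite, 'k::finite) ridx" where
  "pack c a v = (\<chi> r. case r of Inl ij \<Rightarrow> c $ ij | Inr (Inl i) \<Rightarrow> a $ i | Inr (Inr k) \<Rightarrow> v $ k)"

definition unpack1 :: "real^('m::finite, 'k::finite) ridx \<Rightarrow> real^('m \<times> 'k option)" where
  "unpack1 x = (\<chi> ij. x $ Inl ij)"
definition unpack2 :: "real^('m::finite, 'k::finite) ridx \<Rightarrow> real^'m" where
  "unpack2 x = (\<chi> i. x $ Inr (Inl i))"
definition unpack3 :: "real^('m::finite, 'k::finite) ridx \<Rightarrow> real^'k" where
  "unpack3 x = (\<chi> k. x $ Inr (Inr k))"

definition vec_of_mat :: "real^'n^'m \<Rightarrow> real^('m \<times> 'n)" where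
  "vec_of_mat C = (\<chi> ij. C $ fst ij $ snd ij)"
definition mat_of_vec :: "real^('m \<times> 'n) \<Rightarrow> real^'n^'m" where
  "mat_of_vec c = (\<chi> i j. c $ (i, j))"

text \<open>Reduced map K-tilde: first l-1 components of K with beta = [beta-tilde; 0];
  x = [c; a; b-tilde], y = [p; alpha; beta-tilde]; bn is the (irrelevant) value b_n.\<close>
definition KKT_red :: "real \<Rightarrow> real \<Rightarrow> real^('m::finite, 'k::finite) ridx \<Rightarrow> real^('m, 'k) ridx
                       \<Rightarrow> real^('m, 'k) ridx" where
  "KKT_red lam bn x y = (\<chi> r. KKT lam (mat_of_vec (unpack1 x)) (unpack2 x) (ext_with bn (unpack3 x))
                               (unpack1 y) (unpack2 y) (ext0 (unpack3 y)) $ red_emb r)"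

text \<open>E-tilde: E = [1_n (x) I_m, I_n (x) 1_m] with the last column (beta_n) deleted.\<close>
definition Etil :: "'m \<times> 'k option \<Rightarrow> 'm + 'k \<Rightarrow> real" where
  "Etil ij s = (case (ij, s) of ((i, j), Inl i') \<Rightarrow> (if i = i' then 1 else 0)
                | ((i, j), Inr k) \<Rightarrow> (if j = Some k then 1 else 0))"

definition Kmat :: "real \<Rightarrow> real^('m \<times> 'k option) \<Rightarrow> real^('m::finite, 'k::finite) ridx^('m, 'k) ridx" where
  "Kmat lam p = (\<chi> r s. case (r, s) of
      (Inl ij, Inl ij') \<Rightarrow> (if ij = ij' then lam / p $ ij else 0)
    | (Inl ij, Inr t) \<Rightarrow> Etil ij t
    | (Inr t, Inl ij) \<Rightarrow> Etil ij t
    | (Inr t, Inr t') \<Rightarrow> 0)"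

text \<open>Diagonal sign change corresponding to the variables [c; -a; -b-tilde].\<close>
definition sign_flip :: "real^('m::finite, 'k::finite) ridx^('m, 'k) ridx" where
  "sign_flip = (\<chi> r s. if r = s then (case r of Inl _ \<Rightarrow> 1 | Inr _ \<Rightarrow> -1) else 0)"

end

theory Submission
  imports Defs
begin

lemma tangent_phi:
  fixes y z :: real assumes "y \<ge> 0" "z > 0"
  shows "y*(ln y - 1) \<ge> z*(ln z - 1) + ln z * (y - z)"
proof (cases "y = 0")
  case True then show ?thesis using assms by (simp add: algebra_simps)
next
  case False
  then have y: "y > 0" using assms by simp
  have "ln (z/y) \<le> z/y - 1" using ln_le_minus_one y assms by simp
  then have "ln z - ln y \<le> z/y - 1" using y assms by (simp add: ln_div)
  then have "y*(ln z - ln y) \<le> y*(z/y - 1)" using y by (simp add: mult_left_mono)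
  then have "y*ln z - y * ln y \<le> z - y" using y by (simp add: algebra_simps)
  then show ?thesis by (simp add: algebra_simps)
qed

lemma convex_phi:
  fixes x r t :: real assumes "x \<ge> 0" "r > 0" "0 < t" "t < 1"
  shows "((1-t)*x + t*r)*(ln ((1-t)*x + t*r) - 1) \<le> (1-t)*(x*(ln x - 1)) + t*(r*(ln r - 1))"
proof -
  define w where "w = (1-t)*x + t*r"
  have w: "w > 0" unfolding w_def using assms by (smt (verit) mult_nonneg_nonneg mult_pos_pos)
  have 1: "x*(ln x - 1) \<ge> w*(ln w - 1) + ln w * (x - w)" using tangent_phi assms w by blast
  have 2: "r*(ln r - 1) \<ge> w*(ln w - 1) + ln w * (r - w)" using tangent_phi assms w by simp
  have "(1-t)*(x*(ln x - 1)) + t*(r*(ln r - 1)) \<ge> (1-t)*(w*(ln w - 1) + ln w * (x - w)) + t*(w*(ln w - 1) + ln w * (r - w))"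
    using 1 2 assms by (intro add_mono mult_left_mono) auto
  also have "(1-t)*(w*(ln w - 1) + ln w * (x - w)) + t*(w*(ln w - 1) + ln w * (r - w)) = w*(ln w - 1) + ln w * ((1-t)*x + t*r - w)"
    by (simp add: algebra_simps)
  also have "\<dots> = w*(ln w - 1)" by (simp add: w_def)
  finally show ?thesis by (simp add: w_def)
qed

lemma sum_delta2: "(\<Sum>i'\<in>(UNIV::'a::finite set). \<Sum>j'\<in>(UNIV::'b::finite set). if i' = i then if j' = j then c else 0 else 0) = (c::real)"
proof -
  have "\<And>i'. (\<Sum>j'\<in>(UNIV::'b set). if i' = i then if j' = j then c else 0 else 0) = (if i' = i then c else 0)"
    by (case_tac "i' = i") simp_all
  then show ?thesis by simp
qed

lemma obj_eq: "ot_objective lam C Q = (\<Sum>i\<in>UNIV. \<Sum>j\<in>UNIV. Q$i$j * C$i$j + lam * (Q$i$j * (ln (Q$i$j) - 1)))"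
  unfolding ot_objective_def frob_def entropy_def
  by (simp add: sum.distrib sum_distrib_left)

lemma sinkhorn_pos:
  fixes lam :: real and C :: "real^'n^'m" and a :: "real^'m" and b :: "real^'n"
  assumes lam: "lam > 0" and a: "prob_simplex a" "\<forall>i. a $ i > 0"
    and b: "prob_simplex b" "\<forall>j. b $ j > 0"
    and P: "is_sinkhorn lam C a b P"
  shows "P $ i $ j > 0"
proof (rule ccontr)
  assume "\<not> P $ i $ j > 0"
  moreover have Ppol: "P \<in> transport_polytope a b" and Pmin: "\<And>Q. Q \<in> transport_polytope a b \<Longrightarrow> ot_objective lam C P \<le> ot_objective lam C Q"
    using P unfolding is_sinkhorn_def by auto
  moreover have "P $ i $ j \<ge> 0" using Ppol unfolding transport_polytope_def by blast
  ultimately have P0: "P $ i $ j = 0" by linarith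
  define R where "R = (\<chi> i j. a$i * b$j :: real^'n^'m)"
  have sa: "(\<Sum>i\<in>UNIV. a $ i) = 1" and sb: "(\<Sum>j\<in>UNIV. b $ j) = 1" using a b unfolding prob_simplex_def by auto
  have Rpos: "\<And>i j. R$i$j > 0" unfolding R_def using a b by simp
  define Pt where "Pt t = (\<chi> i j. (1-t)*P$i$j + t*R$i$j)" for t :: real
  have Ptpol: "Pt t \<in> transport_polytope a b" if "0 \<le> t" "t \<le> 1" for t
  proof -
    have rows: "\<And>i. (\<Sum>j\<in>UNIV. P $ i $ j) = a $ i" and cols: "\<And>j. (\<Sum>i\<in>UNIV. P $ i $ j) = b $ j"
      and nn: "\<And>i j. P$i$j \<ge> 0" using Ppol unfolding transport_polytope_def by auto
    have "\<forall>i j. Pt t $ i $ j \<ge> 0" unfolding Pt_def using that nn Rpos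
      by (simp add: less_imp_le)
    moreover have "\<forall>i. (\<Sum>j\<in>UNIV. Pt t $ i $ j) = a $ i"
    proof
      fix i
      have "(\<Sum>j\<in>UNIV. Pt t $ i $ j) = (1-t) * (\<Sum>j\<in>UNIV. P $ i $ j) + t * a$i * (\<Sum>j\<in>UNIV. b $ j)"
        unfolding Pt_def R_def by (simp add: sum.distrib sum_distrib_left mult.assoc)
      then show "(\<Sum>j\<in>UNIV. Pt t $ i $ j) = a $ i" by (simp add: rows sb algebra_simps)
    qed
    moreover have "\<forall>j. (\<Sum>i\<in>UNIV. Pt t $ i $ j) = b $ j"
    proof
      fix j
      have "(\<Sum>i\<in>UNIV. Pt t $ i $ j) = (1-t) * (\<Sum>i\<in>UNIV. P $ i $ j) + t * b$j * (\<Sum>i\<in>UNIV. a $ i)"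
        unfolding Pt_def R_def by (simp add: sum.distrib sum_distrib_left sum_distrib_right mult.assoc mult.commute mult.left_commute)
      then show "(\<Sum>i\<in>UNIV. Pt t $ i $ j) = b $ j" by (simp add: cols sa algebra_simps)
    qed
    ultimately show ?thesis unfolding transport_polytope_def by blast
  qed
  define r0 where "r0 = R$i$j"
  define D where "D = ot_objective lam C R - ot_objective lam C P"
  have r0: "r0 > 0" using Rpos r0_def by simp
  have key: "0 \<le> D + lam * r0 * ln t" if t: "0 < t" "t < 1" for t
  proof -
    have nn: "\<And>i j. P$i$j \<ge> 0" using Ppol unfolding transport_polytope_def by auto
    have pw: "Pt t$i'$j' * C$i'$j' + lam * (Pt t$i'$j' * (ln (Pt t$i'$j') - 1))
       \<le> (1-t) * (P$i'$j' * C$i'$j' + lam * (P$i'$j' * (ln (P$i'$j') - 1)))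
         + t * (R$i'$j' * C$i'$j' + lam * (R$i'$j' * (ln (R$i'$j') - 1)))
         + (if i' = i then (if j' = j then lam * t * r0 * ln t else 0) else 0)" for i' j'
    proof (cases "i' = i \<and> j' = j")
      case True
      then have e: "Pt t$i'$j' = t * r0" unfolding Pt_def r0_def using P0 by simp
      have "ln (t * r0) = ln t + ln r0" using t r0 by (simp add: ln_mult)
      then show ?thesis using True e P0 unfolding r0_def by (simp add: algebra_simps)
    next
      case False
      have "Pt t$i'$j' * (ln (Pt t$i'$j') - 1) \<le> (1-t)*(P$i'$j' * (ln (P$i'$j') - 1)) + t*(R$i'$j' * (ln (R$i'$j') - 1))"
        unfolding Pt_def using convex_phi[OF nn Rpos t] by simp
      then have "lam * (Pt t$i'$j' * (ln (Pt t$i'$j') - 1)) \<le> lam * ((1-t)*(P$i'$j' * (ln (P$i'$j') - 1)) + t*(R$i'$j' * (ln (R$i'$j') - 1)))"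
        using lam by (simp add: mult_left_mono)
      then show ?thesis using False unfolding Pt_def by (auto simp: algebra_simps)
    qed
    have "ot_objective lam C (Pt t) \<le> (\<Sum>i'\<in>UNIV. \<Sum>j'\<in>UNIV. (1-t) * (P$i'$j' * C$i'$j' + lam * (P$i'$j' * (ln (P$i'$j') - 1)))
         + t * (R$i'$j' * C$i'$j' + lam * (R$i'$j' * (ln (R$i'$j') - 1)))
         + (if i' = i then (if j' = j then lam * t * r0 * ln t else 0) else 0))"
      unfolding obj_eq by (intro sum_mono pw)
    also have "\<dots> = (1-t) * ot_objective lam C P + t * ot_objective lam C R + lam * t * r0 * ln t"
      unfolding obj_eq by (simp add: sum.distrib sum_distrib_left[symmetric] sum_delta2)
    finally have "ot_objective lam C (Pt t) \<le> (1-t) * ot_objective lam C P + t * ot_objective lam C R + lam * t * r0 * ln t" .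
    moreover have "ot_objective lam C P \<le> ot_objective lam C (Pt t)" using Pmin Ptpol t by simp
    ultimately have "0 \<le> t * (D + lam * r0 * ln t)" unfolding D_def by (simp add: algebra_simps)
    then show ?thesis using t by (simp add: zero_le_mult_iff)
  qed
  define M where "M = \<bar>D\<bar> / (lam * r0) + 1"
  have Mpos: "M > 0" unfolding M_def using lam r0 by (simp add: add_nonneg_pos)
  have "0 \<le> D + lam * r0 * ln (exp (-M))"
    using key[of "exp (-M)"] Mpos by simp
  then have "0 \<le> D - lam * r0 * M" by simp
  moreover have "lam * r0 * M = \<bar>D\<bar> + lam * r0" unfolding M_def using lam r0 by (simp add: field_simps)
  ultimately show False using lam r0 by (smt (verit) mult_pos_pos)
qed

lemma sum_UNIV_Plus: "sum f (UNIV::('a::finite + 'b::finite) set) = (\<Sum>x\<in>UNIV. f (Inl x)) + (\<Sum>x\<in>UNIV. f (Inr x))"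
  by (subst UNIV_Plus_UNIV[symmetric], subst sum.Plus) (auto simp: o_def)

lemma sum_UNIV_prod: "sum f (UNIV::('a::finite \<times> 'b::finite) set) = (\<Sum>x\<in>UNIV. \<Sum>y\<in>UNIV. f (x,y))"
  by (subst UNIV_Times_UNIV[symmetric], subst sum.cartesian_product) simp

lemma sum_UNIV_option: "sum f (UNIV::('a::finite option) set) = f None + (\<Sum>x\<in>UNIV. f (Some x))"
  by (subst UNIV_option_conv, subst sum.insert) (auto simp: sum.reindex)

lemma ifm: "(if P then a else 0) * q = (if P then a * q else (0::real))" by simp

lemma sum_if_outer: "(\<Sum>x\<in>(UNIV::'a::finite set). \<Sum>y\<in>(UNIV::'b::finite set). if x = i then f y else 0) = (\<Sum>y\<in>UNIV. (f y::real))"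
proof -
  have "\<And>x. (\<Sum>y\<in>(UNIV::'b set). if x = i then f y else 0) = (if x = i then (\<Sum>y\<in>UNIV. f y) else 0)"
    by simp
  then show ?thesis by simp
qed

lemma Kmat_mulv:
  fixes p :: "real^('m::finite \<times> 'k::finite option)" and h :: "real^('m,'k) ridx"
  shows "(Kmat lam p *v h) $ r = (case r of
      Inl (i,j) \<Rightarrow> lam / p $ (i,j) * h $ Inl (i,j) + h $ Inr (Inl i) + (case j of None \<Rightarrow> 0 | Some k \<Rightarrow> h $ Inr (Inr k))
    | Inr (Inl i) \<Rightarrow> (\<Sum>j\<in>UNIV. h $ Inl (i,j))
    | Inr (Inr k) \<Rightarrow> (\<Sum>i\<in>UNIV. h $ Inl (i, Some k)))"
proof -
  have e: "(Kmat lam p *v h) $ r = (\<Sum>s\<in>UNIV. Kmat lam p $ r $ s * h $ s)"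
    by (simp add: matrix_vector_mult_def)
  show ?thesis
  proof (cases r)
    case (Inl ij)
    then obtain i j where ij: "r = Inl (i,j)" by (cases ij) auto
    have "(\<Sum>s\<in>UNIV. Kmat lam p $ r $ s * h $ s) = lam / p $ (i,j) * h $ Inl (i,j) + h $ Inr (Inl i) + (case j of None \<Rightarrow> 0 | Some k \<Rightarrow> h $ Inr (Inr k))"
      unfolding ij Kmat_def
      by (cases j) (auto simp: sum_UNIV_Plus Etil_def ifm cong: if_cong)
    then show ?thesis using e ij by simp
  next
    case (Inr t)
    show ?thesis
    proof (cases t)
      case (Inl i)
      have "(\<Sum>s\<in>UNIV. Kmat lam p $ r $ s * h $ s) = (\<Sum>j\<in>UNIV. h $ Inl (i,j))"
        unfolding Inr Inl Kmat_def
        by (simp add: sum_UNIV_Plus sum_UNIV_prod Etil_def ifm sum_if_outer cong: if_cong)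
      then show ?thesis using e Inr Inl by simp
    next
      case (Inr k)
      have "(\<Sum>s\<in>UNIV. Kmat lam p $ r $ s * h $ s) = (\<Sum>i\<in>UNIV. h $ Inl (i, Some k))"
        unfolding \<open>r = Inr t\<close> Inr Kmat_def
        by (simp add: sum_UNIV_Plus sum_UNIV_prod sum_UNIV_option Etil_def ifm cong: if_cong)
      then show ?thesis using e \<open>r = Inr t\<close> Inr by simp
    qed
  qed
qed

lemma Kmat_invertible:
  fixes p :: "real^('m::finite \<times> 'k::finite option)"
  assumes lam: "lam > 0" and pos: "\<And>ij. p $ ij > 0"
  shows "invertible (Kmat lam p)"
  unfolding invertible_left_inverse matrix_left_invertible_ker
proof (intro allI impI)
  fix h :: "real^('m,'k) ridx"
  assume h0: "Kmat lam p *v h = 0"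
  define u where "u i j = h $ Inl (i,j)" for i j
  define \<alpha> where "\<alpha> i = h $ Inr (Inl i)" for i
  define bt where "bt j = (case j of None \<Rightarrow> 0 | Some k \<Rightarrow> h $ Inr (Inr k))" for j
  have E1: "lam / p $ (i,j) * u i j + \<alpha> i + bt j = 0" for i j
    using arg_cong[OF h0, of "\<lambda>v. v $ Inl (i,j)"] unfolding Kmat_mulv u_def \<alpha>_def bt_def by simp
  have E2: "(\<Sum>j\<in>UNIV. u i j) = 0" for i
    using arg_cong[OF h0, of "\<lambda>v. v $ Inr (Inl i)"] unfolding Kmat_mulv u_def by simp
  have E3: "bt j * (\<Sum>i\<in>UNIV. u i j) = 0" for j
  proof (cases j)
    case None then show ?thesis by (simp add: bt_def)
  next
    case (Some k)
    then show ?thesis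
      using arg_cong[OF h0, of "\<lambda>v. v $ Inr (Inr k)"] unfolding Kmat_mulv u_def by simp
  qed
  have "(\<Sum>i\<in>UNIV. \<Sum>j\<in>UNIV. u i j * (lam / p $ (i,j) * u i j)) = (\<Sum>i\<in>UNIV. \<Sum>j\<in>UNIV. - (\<alpha> i * u i j) - bt j * u i j)"
    using E1 by (intro sum.cong refl) (smt (verit, best) mult.commute mult_minus_left ring_class.ring_distribs(2))
  also have "\<dots> = - (\<Sum>i\<in>UNIV. \<alpha> i * (\<Sum>j\<in>UNIV. u i j)) - (\<Sum>j\<in>UNIV. bt j * (\<Sum>i\<in>UNIV. u i j))"
    by (simp add: sum_subtractf sum_negf sum_distrib_left sum.swap[of "\<lambda>i j. bt j * u i j"])
  also have "\<dots> = 0" by (simp only: E2 E3 mult_zero_right sum.neutral_const diff_zero neg_0_equal_iff_equal)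
  finally have S0: "(\<Sum>i\<in>UNIV. \<Sum>j\<in>UNIV. u i j * (lam / p $ (i,j) * u i j)) = 0" .
  have nn: "u i j * (lam / p $ (i,j) * u i j) \<ge> 0" for i j
  proof -
    have "u i j * (lam / p $ (i,j) * u i j) = lam / p $ (i,j) * (u i j)^2" by (simp add: power2_eq_square)
    moreover have "lam / p $ (i,j) * (u i j)^2 \<ge> 0" using lam pos[of "(i,j)"] by simp
    ultimately show ?thesis by linarith
  qed
  have "\<forall>i. (\<Sum>j\<in>UNIV. u i j * (lam / p $ (i,j) * u i j)) = 0"
  proof -
    have "\<forall>i\<in>UNIV. 0 \<le> (\<Sum>j\<in>UNIV. u i j * (lam / p $ (i,j) * u i j))"
      using nn by (simp add: sum_nonneg del: times_divide_eq_right times_divide_eq_left)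
    then show ?thesis using S0 sum_nonneg_eq_0_iff[of UNIV "\<lambda>i. (\<Sum>j\<in>UNIV. u i j * (lam / p $ (i,j) * u i j))"] by simp
  qed
  then have "\<forall>i j. u i j * (lam / p $ (i,j) * u i j) = 0"
    using sum_nonneg_eq_0_iff[of UNIV "\<lambda>j. u i j * (lam / p $ (i,j) * u i j)" for i] nn by simp
  then have u0: "u i j = 0" for i j
    using lam pos[of "(i,j)"] by (metis divide_eq_0_iff mult_eq_0_iff less_irrefl)
  have a0: "\<alpha> i = 0" for i using E1[of i None] u0 by (simp add: bt_def)
  have b0: "h $ Inr (Inr k) = 0" for k using E1[of _ "Some k"] u0 a0 by (simp add: bt_def)
  show "h = 0"
  proof (rule vec_eq_iff[THEN iffD2], rule allI)
    fix r :: "('m,'k) ridx"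
    show "h $ r = 0 $ r"
      using u0 a0 b0 unfolding u_def \<alpha>_def
      by (cases r rule: sum.exhaust; auto; case_tac x2; auto)
  qed
qed

lemma matrix_inv_props:
  fixes A :: "real^'n^'n"
  assumes "invertible A"
  shows "A ** matrix_inv A = mat 1" "matrix_inv A ** A = mat 1"
proof -
  have "A ** matrix_inv A = mat 1 \<and> matrix_inv A ** A = mat 1"
    using assms unfolding matrix_inv_def invertible_def by (rule someI_ex)
  then show "A ** matrix_inv A = mat 1" "matrix_inv A ** A = mat 1" by auto
qed

lemma matrix_inv_cramer:
  fixes A :: "real^'n^'n"
  assumes d: "det A \<noteq> 0"
  shows "matrix_inv A $ i $ j = det (\<chi> r s. if s = i then (if r = j then 1 else 0) else A$r$s) / det A"
proof -
  have inv: "invertible A" using d invertible_det_nz by blast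
  define x where "x = matrix_inv A *v axis j 1"
  have "A *v x = axis j 1" unfolding x_def
    by (simp add: matrix_vector_mul_assoc matrix_inv_props[OF inv])
  then have "x = (\<chi> k. det(\<chi> r s. if s=k then (axis j 1 :: real^'n)$r else A$r$s) / det A)"
    using cramer[OF d] by blast
  then have "x $ i = det(\<chi> r s. if s=i then (axis j 1 :: real^'n)$r else A$r$s) / det A" by simp
  moreover have "x $ i = matrix_inv A $ i $ j"
    unfolding x_def by (simp add: matrix_vector_mult_basis column_def)
  moreover have "(\<chi> r s. if s=i then (axis j 1 :: real^'n)$r else A$r$s) = (\<chi> r s. if s = i then (if r = j then 1 else 0) else A$r$s)"
    by (simp add: axis_def vec_eq_iff)
  ultimately show ?thesis by simp
qed

lemma continuous_on_det:
  fixes f :: "'a::topological_space \<Rightarrow> real^'n^'n"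
  assumes "continuous_on S f"
  shows "continuous_on S (\<lambda>x. det (f x))"
  unfolding det_def by (intro continuous_intros assms)

lemma cont_if_const: "continuous_on S g \<Longrightarrow> continuous_on S (\<lambda>x. if P then c else g x)"
  by (cases P) auto

lemma continuous_on_matrix_inv:
  fixes f :: "'a::topological_space \<Rightarrow> real^'n^'n"
  assumes c: "continuous_on S f" and inv: "\<And>x. x \<in> S \<Longrightarrow> invertible (f x)"
  shows "continuous_on S (\<lambda>x. matrix_inv (f x))"
proof -
  have d: "\<And>x. x \<in> S \<Longrightarrow> det (f x) \<noteq> 0" using inv invertible_det_nz by blast
  have "continuous_on S (\<lambda>x. \<chi> i j. det (\<chi> r s. if s = i then (if r = j then 1 else 0) else f x$r$s) / det (f x))"
    using d by (intro continuous_intros continuous_on_det cont_if_const c) auto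
  moreover have "\<And>x. x \<in> S \<Longrightarrow> matrix_inv (f x) = (\<chi> i j. det (\<chi> r s. if s = i then (if r = j then 1 else 0) else f x$r$s) / det (f x))"
    using d by (simp add: vec_eq_iff matrix_inv_cramer)
  ultimately show ?thesis using continuous_on_cong by (smt (verit))
qed

lemma continuous_on_matrix_mult_const:
  fixes f :: "'a::topological_space \<Rightarrow> real^'n^'m"
  assumes "continuous_on S f"
  shows "continuous_on S (\<lambda>x. f x ** (B::real^'p^'n))"
  unfolding matrix_matrix_mult_def by (intro continuous_intros assms)

lemma continuous_on_matrix_vec_const:
  fixes f :: "'a::topological_space \<Rightarrow> real^'n^'m"
  assumes "continuous_on S f"
  shows "continuous_on S (\<lambda>x. f x *v (v::real^'n))"
  unfolding matrix_vector_mult_def by (intro continuous_intros assms)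

definition Gmap :: "real \<Rightarrow> real^('m::finite,'k::finite) ridx \<Rightarrow> real^('m,'k) ridx" where
  "Gmap lam y = (\<chi> r. case r of
      Inl (i,j) \<Rightarrow> lam * ln (y $ Inl (i,j)) + y $ Inr (Inl i) + (case j of None \<Rightarrow> 0 | Some k \<Rightarrow> y $ Inr (Inr k))
    | Inr (Inl i) \<Rightarrow> (\<Sum>j\<in>UNIV. y $ Inl (i,j))
    | Inr (Inr k) \<Rightarrow> (\<Sum>i\<in>UNIV. y $ Inl (i, Some k)))"

lemma sign_flip_mulv: "((sign_flip :: real^('m::finite,'k::finite) ridx^('m,'k) ridx) *v x) $ r = (case r of Inl _ \<Rightarrow> x $ r | Inr _ \<Rightarrow> - x $ r)"
  unfolding matrix_vector_mult_def sign_flip_def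
  by (cases r) (auto simp: if_distrib[where f="\<lambda>z. z * _"] cong: if_cong)

lemma KKT_red_decomp:
  fixes x y :: "real^('m::finite,'k::finite) ridx"
  shows "KKT_red lam bn x y = sign_flip *v x + Gmap lam y"
proof (rule vec_eq_iff[THEN iffD2], rule allI)
  fix r :: "('m,'k) ridx"
  show "KKT_red lam bn x y $ r = (sign_flip *v x + Gmap lam y) $ r"
  proof (cases r)
    case (Inl ij)
    then show ?thesis
      by (cases ij; cases "snd ij")
        (auto simp: KKT_red_def KKT_def red_emb_def unpack1_def unpack2_def unpack3_def mat_of_vec_def ext0_def ext_with_def Gmap_def sign_flip_mulv)
  next
    case (Inr t)
    then show ?thesis
      by (cases t)
        (auto simp: KKT_red_def KKT_def red_emb_def unpack1_def unpack2_def unpack3_def mat_of_vec_def ext0_def ext_with_def Gmap_def sign_flip_mulv)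
  qed
qed

lemma has_derivative_vec_componentwise:
  fixes f :: "'a::real_normed_vector \<Rightarrow> real^'n"
  assumes "\<And>i. ((\<lambda>x. f x $ i) has_derivative (\<lambda>h. f' h $ i)) (at x)"
  shows "(f has_derivative f') (at x)"
  using assms unfolding has_derivative_componentwise_within[of f f' x UNIV]
  by (auto simp: Basis_vec_def inner_axis)

lemma has_derivative_nth: "((\<lambda>y. y $ i) has_derivative (\<lambda>h. h $ i)) F"
  by (rule bounded_linear_imp_has_derivative) (rule bounded_linear_vec_nth)

lemma Gmap_deriv:
  fixes y :: "real^('m::finite,'k::finite) ridx"
  assumes pos: "\<And>ij. y $ Inl ij > 0"
  shows "(Gmap lam has_derivative (\<lambda>h. Kmat lam (unpack1 y) *v h)) (at y)"
proof (rule has_derivative_vec_componentwise)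
  fix r :: "('m,'k) ridx"
  show "((\<lambda>y. Gmap lam y $ r) has_derivative (\<lambda>h. (Kmat lam (unpack1 y) *v h) $ r)) (at y)"
  proof (cases r)
    case (Inl ij)
    then obtain i j where ij: "r = Inl (i,j)" by (cases ij) auto
    have d1: "((\<lambda>y. lam * ln (y $ Inl (i,j))) has_derivative (\<lambda>h. lam / y $ Inl (i,j) * h $ Inl (i,j))) (at y)"
      by (rule has_derivative_eq_rhs[OF has_derivative_mult_right[OF has_derivative_ln[OF pos[of "(i,j)"] has_derivative_nth]]])
        (simp add: fun_eq_iff field_simps)
    show ?thesis
    proof (cases j)
      case None
      have "((\<lambda>y. lam * ln (y $ Inl (i,j)) + y $ Inr (Inl i)) has_derivative (\<lambda>h. lam / y $ Inl (i,j) * h $ Inl (i,j) + h $ Inr (Inl i))) (at y)"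
        by (intro has_derivative_add d1 has_derivative_nth)
      then show ?thesis using None ij by (simp add: Gmap_def Kmat_mulv unpack1_def)
    next
      case (Some k)
      have "((\<lambda>y. lam * ln (y $ Inl (i,j)) + y $ Inr (Inl i) + y $ Inr (Inr k)) has_derivative (\<lambda>h. lam / y $ Inl (i,j) * h $ Inl (i,j) + h $ Inr (Inl i) + h $ Inr (Inr k))) (at y)"
        by (intro has_derivative_add d1 has_derivative_nth)
      then show ?thesis using Some ij by (simp add: Gmap_def Kmat_mulv unpack1_def)
    qed
  next
    case (Inr t)
    show ?thesis
    proof (cases t)
      case (Inl i)
      have "((\<lambda>y. \<Sum>j\<in>UNIV. y $ Inl (i,j)) has_derivative (\<lambda>h. \<Sum>j\<in>UNIV. h $ Inl (i,j))) (at y)"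
        by (intro has_derivative_sum has_derivative_nth)
      then show ?thesis using Inl \<open>r = Inr t\<close> by (simp add: Gmap_def Kmat_mulv)
    next
      case (Inr k)
      have "((\<lambda>y. \<Sum>i\<in>UNIV. y $ Inl (i,Some k)) has_derivative (\<lambda>h. \<Sum>i\<in>UNIV. h $ Inl (i,Some k))) (at y)"
        by (intro has_derivative_sum has_derivative_nth)
      then show ?thesis using Inr \<open>r = Inr t\<close> by (simp add: Gmap_def Kmat_mulv)
    qed
  qed
qed

lemma neg_mm: "(- (A::real^'n^'m)) ** (B::real^'p^'n) = - (A ** B)"
  by (simp add: vec_eq_iff matrix_matrix_mult_def sum_negf)

lemma neg_mv: "(- (A::real^'n^'m)) *v (v::real^'n) = - (A *v v)"
  by (simp add: vec_eq_iff matrix_vector_mult_def sum_negf)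

lemma sign_flip_sq: "(sign_flip :: real^('m::finite,'k::finite) ridx^('m,'k) ridx) ** sign_flip = mat 1"
  unfolding matrix_matrix_mult_def sign_flip_def mat_def
  by (simp add: vec_eq_iff ifm cong: if_cong split: sum.split)

lemma unpack_pack:
  "unpack1 (pack c a v) = c" "unpack2 (pack c a v) = a" "unpack3 (pack c a v) = v"
  by (simp_all add: unpack1_def unpack2_def unpack3_def pack_def vec_eq_iff)

lemma mat_of_vec_of_mat: "mat_of_vec (vec_of_mat C) = C"
  by (simp add: mat_of_vec_def vec_of_mat_def vec_eq_iff)

lemma ext_with_restrict: "ext_with (b $ None) (\<chi> k. b $ Some k) = b"
  by (simp add: ext_with_def vec_eq_iff split: option.split)

lemma ext0_restrict: "\<beta> $ None = 0 \<Longrightarrow> ext0 (\<chi> k. \<beta> $ Some k) = \<beta>"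
  by (simp add: ext0_def vec_eq_iff split: option.split)

lemma Kmat_entry: "Kmat lam p $ r $ s = (case r of
     Inl ij \<Rightarrow> (case s of Inl ij' \<Rightarrow> (if ij = ij' then lam / p $ ij else 0) | Inr t \<Rightarrow> Etil ij t)
   | Inr t \<Rightarrow> (case s of Inl ij \<Rightarrow> Etil ij t | Inr t' \<Rightarrow> 0))"
  by (simp add: Kmat_def split: sum.split)

lemma Kmat_cont:
  "continuous_on {y::real^('m::finite,'k::finite) ridx. \<forall>ij. y $ Inl ij > 0} (\<lambda>y. Kmat lam (unpack1 y))"
proof -
  let ?W = "{y::real^('m,'k) ridx. \<forall>ij. y $ Inl ij > 0}"
  have "continuous_on ?W (\<lambda>y. Kmat lam (unpack1 y) $ r $ s)" for r s
  proof (cases r)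
    case (Inl ij)
    show ?thesis
    proof (cases s)
      case (Inl ij')
      have "continuous_on ?W (\<lambda>y. lam / y $ Inl ij)"
        by (intro continuous_intros) (metis (mono_tags) mem_Collect_eq less_irrefl)
      moreover have eq: "\<And>y. Kmat lam (unpack1 y) $ r $ s = (if ij = ij' then lam / y$Inl ij else 0)"
        using \<open>r = Inl ij\<close> Inl by (simp add: Kmat_entry unpack1_def)
      ultimately show ?thesis unfolding eq by (cases "ij = ij'") simp_all
    next
      case (Inr t) then show ?thesis using \<open>r = Inl ij\<close> by (simp add: Kmat_entry)
    qed
  next
    case (Inr t) then show ?thesis by (cases s) (simp_all add: Kmat_entry)
  qed
  then have "continuous_on ?W (\<lambda>y. \<chi> r s. Kmat lam (unpack1 y) $ r $ s)"
    by (intro continuous_on_vec_lambda)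
  then show ?thesis by simp
qed

theorem lemma2:
  fixes lam :: real
    and C :: "real^('k::finite option)^('m::finite)"
    and a :: "real^'m" and b :: "real^('k option)"
    and Pstar :: "real^('k option)^'m"
    and \<alpha>star :: "real^'m" and \<beta>star :: "real^('k option)"
  assumes m2: "CARD('m) \<ge> 2"
    and lam: "lam > 0"
    and a: "prob_simplex a" "\<forall>i. a $ i > 0"
    and b: "prob_simplex b" "\<forall>j. b $ j > 0"
    and P: "is_sinkhorn lam C a b Pstar"
    and KKT0: "KKT lam C a b (vec_of_mat Pstar) \<alpha>star \<beta>star = 0"
    and norm: "\<beta>star $ None = 0"
  defines "x0 \<equiv> pack (vec_of_mat C) a (\<chi> k. b $ Some k)"
    and "y0 \<equiv> pack (vec_of_mat Pstar) \<alpha>star (\<chi> k. \<beta>star $ Some k)"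
    and "K \<equiv> Kmat lam (vec_of_mat Pstar)"
  shows "invertible K \<and>
    (\<exists>U V g g'. open U \<and> x0 \<in> U \<and> open V \<and> y0 \<in> V \<and> g x0 = y0 \<and>
       (\<forall>x\<in>U. g x \<in> V) \<and>
       (\<forall>x\<in>U. \<forall>y\<in>V. KKT_red lam (b $ None) x y = 0 \<longleftrightarrow> y = g x) \<and>
       (\<forall>x\<in>U. (g has_derivative (\<lambda>h. g' x *v h)) (at x)) \<and>
       continuous_on U g' \<and>
       g' x0 ** sign_flip = - matrix_inv K)"
proof -
  have Ppos: "\<And>i j. Pstar $ i $ j > 0" using sinkhorn_pos[OF lam a b P] .
  have vpos: "\<And>ij. vec_of_mat Pstar $ ij > 0" using Ppos by (simp add: vec_of_mat_def)
  have Kinv: "invertible K" unfolding K_def by (rule Kmat_invertible[OF lam vpos])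
  define W where "W = {y::real^('m,'k) ridx. \<forall>ij. y $ Inl ij > 0}"
  have openW: "open W"
  proof -
    have "W = (\<Inter>ij\<in>UNIV. {y. 0 < y $ Inl ij})" unfolding W_def by auto
    moreover have "\<And>ij. open {y::real^('m,'k) ridx. 0 < y $ Inl ij}"
      by (intro open_Collect_less continuous_intros)
    ultimately show ?thesis by (simp add: open_INT)
  qed
  have y0W: "y0 \<in> W" unfolding W_def y0_def using vpos by (simp add: pack_def)
  have u1y0: "unpack1 y0 = vec_of_mat Pstar" unfolding y0_def by (simp add: unpack_pack)
  define f' where "f' y = Blinfun (\<lambda>h. Kmat lam (unpack1 y) *v h)" for y :: "real^('m,'k) ridx"
  have f'a: "blinfun_apply (f' y) = (\<lambda>h. Kmat lam (unpack1 y) *v h)" for y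
    unfolding f'_def by (rule bounded_linear_Blinfun_apply) simp
  have derf: "\<And>y. y \<in> W \<Longrightarrow> (Gmap lam has_derivative blinfun_apply (f' y)) (at y)"
    unfolding f'a W_def by (rule Gmap_deriv) (metis (mono_tags) mem_Collect_eq)
  have contf: "continuous_on W f'"
  proof (rule continuous_on_blinfun_componentwise)
    fix e :: "real^('m,'k) ridx"
    show "continuous_on W (\<lambda>y. blinfun_apply (f' y) e)"
      unfolding f'a W_def by (intro continuous_on_matrix_vec_const Kmat_cont)
  qed
  define invf where "invf = Blinfun (\<lambda>h. matrix_inv K *v h)"
  have invfa: "blinfun_apply invf = (\<lambda>h. matrix_inv K *v h)"
    unfolding invf_def by (rule bounded_linear_Blinfun_apply) simp
  have invf: "invf o\<^sub>L f' y0 = id_blinfun"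
    by (rule blinfun_eqI) (simp add: invfa f'a u1y0 K_def[symmetric] matrix_vector_mul_assoc matrix_inv_props[OF Kinv])
  obtain U' V' h h'' where U': "open U'" "U' \<subseteq> W" "y0 \<in> U'" and V': "open V'" "Gmap lam y0 \<in> V'"
      and hom: "homeomorphism U' V' (Gmap lam) h"
      and derh: "\<And>z. z \<in> V' \<Longrightarrow> (h has_derivative (h'' z)) (at z)"
      and h'': "\<And>z. z \<in> V' \<Longrightarrow> h'' z = inv (blinfun_apply (f'(h z)))"
    using inverse_function_theorem[OF openW derf contf y0W invf] by metis
  have hG: "\<And>y. y \<in> U' \<Longrightarrow> h (Gmap lam y) = y" and Gh: "\<And>z. z \<in> V' \<Longrightarrow> Gmap lam (h z) = z"
    and hV: "h ` V' = U'" and hcont: "continuous_on V' h"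
    using hom unfolding homeomorphism_def by auto
  have KKTx0: "KKT_red lam (b $ None) x0 y0 = 0"
    unfolding KKT_red_def x0_def y0_def unpack_pack mat_of_vec_of_mat ext_with_restrict ext0_restrict[OF norm] KKT0
    by (simp add: vec_eq_iff)
  then have Gy0: "Gmap lam y0 = - (sign_flip *v x0)"
    unfolding KKT_red_decomp by (simp add: add_eq_0_iff)
  define L where "L x = - (sign_flip *v x)" for x :: "real^('m,'k) ridx"
  have Lcont: "continuous_on UNIV L" unfolding L_def
    by (intro continuous_intros linear_continuous_on bounded_linear_minus matrix_vector_mul_bounded_linear)
  define U where "U = L -` V'"
  have openU: "open U" unfolding U_def using open_vimage[OF V'(1) Lcont] .
  have x0U: "x0 \<in> U" unfolding U_def L_def using V'(2) Gy0 by simp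
  define g where "g x = h (L x)" for x
  define g' where "g' x = - (matrix_inv (Kmat lam (unpack1 (g x))) ** sign_flip)" for x
  have gx0: "g x0 = y0" unfolding g_def L_def using Gy0[symmetric] hG[OF U'(3)] by simp
  have gV: "\<forall>x\<in>U. g x \<in> U'" unfolding g_def U_def using hV by auto
  have gW: "\<And>x. x \<in> U \<Longrightarrow> g x \<in> W" using gV U'(2) by auto
  have Kgx: "\<And>x. x \<in> U \<Longrightarrow> invertible (Kmat lam (unpack1 (g x)))"
    using gW lam by (intro Kmat_invertible) (auto simp: W_def unpack1_def)
  have equiv: "\<forall>x\<in>U. \<forall>y\<in>U'. KKT_red lam (b $ None) x y = 0 \<longleftrightarrow> y = g x"
  proof (intro ballI)
    fix x y assume x: "x \<in> U" and y: "y \<in> U'"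
    have "KKT_red lam (b $ None) x y = 0 \<longleftrightarrow> Gmap lam y = L x"
      unfolding KKT_red_decomp L_def by (auto simp: add_eq_0_iff)
    also have "\<dots> \<longleftrightarrow> y = g x"
      unfolding g_def using x y hG Gh U_def by (metis vimageE)
    finally show "KKT_red lam (b $ None) x y = 0 \<longleftrightarrow> y = g x" .
  qed
  have derg: "\<forall>x\<in>U. (g has_derivative (\<lambda>v. g' x *v v)) (at x)"
  proof
    fix x assume x: "x \<in> U"
    have LV: "L x \<in> V'" using x U_def by auto
    define Kz where "Kz = Kmat lam (unpack1 (g x))"
    have Kzi: "invertible Kz" unfolding Kz_def using Kgx[OF x] .
    have hinv: "h'' (L x) = (\<lambda>v. matrix_inv Kz *v v)"
    proof -
      have "inv (blinfun_apply (f' (h (L x)))) = (\<lambda>v. matrix_inv Kz *v v)"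
        unfolding f'a Kz_def[unfolded g_def, symmetric]
        by (rule inv_unique_comp) (simp_all add: fun_eq_iff o_def matrix_vector_mul_assoc matrix_inv_props[OF Kzi])
      then show ?thesis using h''[OF LV] by simp
    qed
    have dL: "(L has_derivative L) (at x)" unfolding L_def
      by (rule bounded_linear_imp_has_derivative) (intro bounded_linear_minus matrix_vector_mul_bounded_linear)
    have "((\<lambda>x. h (L x)) has_derivative (\<lambda>v. h'' (L x) (L v))) (at x)"
      by (rule has_derivative_compose[OF dL derh[OF LV]])
    moreover have "(\<lambda>v. h'' (L x) (L v)) = (\<lambda>v. g' x *v v)"
      unfolding hinv unfolding g'_def Kz_def[symmetric] L_def
      by (simp add: fun_eq_iff neg_mv matrix_vector_mul_assoc vec.neg)
    ultimately show "(g has_derivative (\<lambda>v. g' x *v v)) (at x)"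
      unfolding g_def by simp
  qed
  have gcont: "continuous_on U g"
    unfolding g_def
    by (rule continuous_on_compose2[OF hcont continuous_on_subset[OF Lcont]]) (auto simp: U_def)
  have Kcont: "continuous_on U (\<lambda>x. Kmat lam (unpack1 (g x)))"
    using continuous_on_compose2[OF Kmat_cont gcont] gW unfolding W_def by blast
  have g'cont: "continuous_on U g'"
    unfolding g'_def
    by (intro continuous_on_minus continuous_on_matrix_mult_const continuous_on_matrix_inv[OF Kcont Kgx])
  have fin: "g' x0 ** sign_flip = - matrix_inv K"
    unfolding g'_def gx0 u1y0 K_def[symmetric]
    by (simp add: neg_mm matrix_mul_assoc[symmetric] sign_flip_sq)
  show ?thesis
    using Kinv openU x0U U'(1,3) gx0 gV equiv derg g'cont fin by blast
qed

end
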